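(* Let $ABC$ be a nondegenerate triangle, let $P$ be a point not lying on any of the lines $BC$, $CA$, $AB$, and let $XYZ$ be a (nondegenerate) Miquel triangle of $P$ relative to $ABC$. (i) If $P$ lies in the interior of triangle $ABC$, then $P$ lies in the interior of triangle $XYZ$. (ii) If $P$ lies in the exterior of triangle $ABC$, then $P$ lies in the exterior of triangle $XYZ$.
   Context: Miquel triangle: given a triangle $ABC$ and a point $P$ not on the lines $BC,CA,AB$, a triangle $XYZ$ with $X$ on line $BC$, $Y$ on line $CA$, $Z$ on line $AB$ is called a Miquel triangle of $P$ relative to $ABC$ if $P$ lies on each of the three circles through $A,Y,Z$, through $B,Z,X$, and through $C,X,Y$ (the Miquel circles). The pedal triangle of $P$ is one such triangle, and all Miquel triangles of a fixed $P$ are similar to each other. *)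

theory Defs
  imports "HOL-Analysis.Analysis"
begin

text \<open>Points of the Euclidean plane are modelled as complex numbers.
  A finite set of points is concyclic if some circle (positive radius) passes through all of them.\<close>

definition concyclic :: "complex set \<Rightarrow> bool" where
  "concyclic S \<longleftrightarrow> (\<exists>c r. r > 0 \<and> S \<subseteq> sphere c r)"

definition miquel_triangle ::
  "complex \<Rightarrow> complex \<Rightarrow> complex \<Rightarrow> complex \<Rightarrow> complex \<Rightarrow> complex \<Rightarrow> complex \<Rightarrow> bool" where
  "miquel_triangle A B C P X Y Z \<longleftrightarrow>
     X \<in> affine hull {B, C} \<and> Y \<in> affine hull {C, A} \<and> Z \<in> affine hull {A, B} \<and>
     concyclic {A, Y, Z, P} \<and> concyclic {B, Z, X, P} \<and> concyclic {C, X, Y, P}"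

end

theory Submission
  imports Defs
begin

definition cr :: "complex \<Rightarrow> complex \<Rightarrow> real" where
  "cr u v = Re u * Im v - Im u * Re v"

lemma cr_coll0:
  assumes "cr u v = 0" shows "collinear {0, u, v}"
proof (cases "u = 0")
  case True then show ?thesis by (simp add: collinear_lemma)
next
  case False
  have "v = Re (v / u) *\<^sub>R u"
  proof -
    have "Im (v / u) = 0" using assms False
      by (simp add: cr_def Im_divide field_simps)
    hence "v / u = of_real (Re (v/u))" by (simp add: complex_eq_iff)
    hence "v = of_real (Re (v/u)) * u" using False by (simp add: field_simps)
    thus ?thesis by (simp add: scaleR_conv_of_real)
  qed
  then show ?thesis by (auto simp: collinear_lemma)
qed

lemma cr_coll:
  assumes "cr (y - x) (z - x) = 0" shows "collinear {x, y, z}"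
proof -
  have "cr (x - y) (z - y) = 0" using assms by (simp add: cr_def algebra_simps)
  hence "collinear {0, x - y, z - y}" by (rule cr_coll0)
  moreover have "collinear {x,y,z} \<longleftrightarrow> collinear {0, x-y, z-y}"
    by (rule collinear_3) (simp add: NO_MATCH_def)
  ultimately show ?thesis by simp
qed

lemma aff2:
  assumes "X \<in> affine hull {B, C}" shows "\<exists>v::real. X = B + of_real v * (C - B)"
proof -
  obtain u v where X: "X = u *\<^sub>R B + v *\<^sub>R C" and uv: "u + v = 1"
    using assms by (auto simp: affine_hull_2)
  from uv have "u = 1 - v" by simp
  with X have "X = B + of_real v * (C - B)" by (simp add: scaleR_conv_of_real algebra_simps)
  thus ?thesis by blast
qed

lemma onl:
  assumes "B \<noteq> C" "cr (B - P) (C - P) = 0" shows "P \<in> affine hull {B, C}"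
proof -
  have "cr (C - B) (P - B) = 0" using assms(2) by (simp add: cr_def algebra_simps)
  hence "collinear {B, C, P}" by (rule cr_coll)
  thus ?thesis using assms(1) collinear_3_affine_hull by blast
qed

lemma div_sign: "0 \<le> d*x \<Longrightarrow> d \<noteq> 0 \<Longrightarrow> 0 \<le> x/(d::real)"
  by (cases "d > 0") (auto simp: zero_le_mult_iff zero_le_divide_iff)

lemma hull3:
  assumes D: "cr (b - a) (c - a) \<noteq> 0"
  shows "p \<in> convex hull {a,b,c} \<longleftrightarrow>
     (0 \<le> cr (b - a) (c - a) * cr (b - p) (c - p) \<and> 0 \<le> cr (b - a) (c - a) * cr (c - p) (a - p)
      \<and> 0 \<le> cr (b - a) (c - a) * cr (a - p) (b - p))"
proof -
  define d where "d = cr (b - a) (c - a)"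
  have dsum: "d = cr (b - p) (c - p) + cr (c - p) (a - p) + cr (a - p) (b - p)"
    unfolding d_def cr_def by (simp add: algebra_simps)
  have dnz: "d \<noteq> 0" using D d_def by simp
  show ?thesis unfolding d_def[symmetric]
  proof
    assume "p \<in> convex hull {a,b,c}"
    then obtain u v w where uvw: "0 \<le> u" "0 \<le> v" "0 \<le> w" "u + v + w = 1"
      and p: "p = u *\<^sub>R a + v *\<^sub>R b + w *\<^sub>R c"
      by (auto simp: convex_hull_3)
    have w1: "u = 1 - v - w" using uvw by simp
    have e1: "cr (b - p) (c - p) = u * d" "cr (c - p) (a - p) = v * d" "cr (a - p) (b - p) = w * d"
      unfolding p d_def cr_def w1 by (simp_all add: algebra_simps)
    show "0 \<le> d * cr (b - p) (c - p) \<and> 0 \<le> d * cr (c - p) (a - p) \<and> 0 \<le> d * cr (a - p) (b - p)"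
      unfolding e1 using uvw by (auto simp: mult.left_commute[of d] intro!: mult_nonneg_nonneg)
  next
    assume H: "0 \<le> d * cr (b - p) (c - p) \<and> 0 \<le> d * cr (c - p) (a - p) \<and> 0 \<le> d * cr (a - p) (b - p)"
    define u where "u = cr (b - p) (c - p) / d"
    define v where "v = cr (c - p) (a - p) / d"
    define w where "w = cr (a - p) (b - p) / d"
    have pos: "0 \<le> u" "0 \<le> v" "0 \<le> w"
      using H dnz unfolding u_def v_def w_def by (auto intro: div_sign)
    have s1: "u + v + w = 1" unfolding u_def v_def w_def using dnz dsum
      by (simp add: add_divide_distrib[symmetric])
    have key: "d *\<^sub>R p = cr (b - p) (c - p) *\<^sub>R a + cr (c - p) (a - p) *\<^sub>R b + cr (a - p) (b - p) *\<^sub>R c"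
      unfolding d_def cr_def by (simp add: complex_eq_iff algebra_simps)
    have "p = (1/d) *\<^sub>R (d *\<^sub>R p)" using dnz by simp
    also have "\<dots> = u *\<^sub>R a + v *\<^sub>R b + w *\<^sub>R c"
      unfolding key u_def v_def w_def by (simp add: scaleR_add_right)
    finally show "p \<in> convex hull {a,b,c}" using pos s1 unfolding convex_hull_3 by blast
  qed
qed

definition SGR :: "real \<Rightarrow> real \<Rightarrow> real \<Rightarrow> real \<Rightarrow> real \<Rightarrow> real \<Rightarrow> real \<Rightarrow> real \<Rightarrow> bool" where
  "SGR D ba bb bc DX cx cy cz \<longleftrightarrow>
     ((0 < D*ba \<and> 0 < D*bb \<and> 0 < D*bc) \<longrightarrow> (0 < DX*cx \<and> 0 < DX*cy \<and> 0 < DX*cz)) \<and>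
     (\<not>(0 \<le> D*ba \<and> 0 \<le> D*bb \<and> 0 \<le> D*bc) \<longrightarrow> \<not>(0 \<le> DX*cx \<and> 0 \<le> DX*cy \<and> 0 \<le> DX*cz))"

lemma pc: assumes "a * k = p" "0 < k" "0 < (p::real)" shows "0 < a"
proof -
  have "0 < a * k" using assms by simp
  thus ?thesis using assms(2) by (simp add: zero_less_mult_iff)
qed

lemma pcl: assumes "k * a = p" "0 < k" "0 < (p::real)" shows "0 < a"
  using pc[of a k p] assms by (simp add: mult.commute)

lemma sq_pos: "(x::real) \<noteq> 0 \<Longrightarrow> 0 < x^2" by simp

lemma fin_int:
  fixes D DX cx cy cz :: real
  assumes "0 < D*cx" "0 < D*cy" "0 < D*cz" "DX = cx + cy + cz"
  shows "0 < DX*cx \<and> 0 < DX*cy \<and> 0 < DX*cz"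
proof -
  have dd: "0 < D*DX" using assms by (simp add: algebra_simps)
  have *: "0 < DX*q" if "0 < D*q" for q
  proof -
    have "(D*DX)*(D*q) = D^2 * (DX*q)" by (simp add: power2_eq_square algebra_simps)
    moreover have "0 < (D*DX)*(D*q)" using dd that by simp
    moreover have "0 < D^2" using dd by (auto simp: zero_less_mult_iff)
    ultimately show ?thesis using pcl by metis
  qed
  show ?thesis using * assms by blast
qed

lemma fin_ext:
  fixes DX cx cy cz :: real
  assumes "DX \<noteq> 0" "0 \<le> DX*cx" "0 \<le> DX*cy" "cx \<noteq> 0" "cy \<noteq> 0"
  shows "0 < cx * cy"
proof -
  have "0 < DX*cx" "0 < DX*cy" using assms by (auto simp: order_le_less)
  hence "0 < (DX*cx)*(DX*cy)" by simp
  moreover have "(DX*cx)*(DX*cy) = DX^2 * (cx*cy)" by (simp add: power2_eq_square algebra_simps)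
  moreover have "0 < DX^2" using assms by simp
  ultimately show ?thesis using pcl by metis
qed

lemma sgr_gen:
  fixes D ba bb bc DX cx cy cz k1 k2 k3 :: real
  assumes D: "D = ba + bb + bc" and nz: "ba \<noteq> 0" "bb \<noteq> 0" "bc \<noteq> 0" "D \<noteq> 0"
    and DX: "DX = cx + cy + cz" "DX \<noteq> 0"
    and k: "0 < k1" "0 < k2" "0 < k3"
    and ex: "cx * k1 = D * bb * bc" and ey: "cy * k2 = D * bc * ba" and ez: "cz * k3 = D * ba * bb"
  shows "SGR D ba bb bc DX cx cy cz"
  unfolding SGR_def
proof (rule conjI; rule impI)
  assume H: "0 < D*ba \<and> 0 < D*bb \<and> 0 < D*bc"
  have "(D*cx)*k1 = (D*bb)*(D*bc)" using ex by algebra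
  hence 1: "0 < D*cx" using H k pc by (metis mult_pos_pos)
  have "(D*cy)*k2 = (D*bc)*(D*ba)" using ey by algebra
  hence 2: "0 < D*cy" using H k pc by (metis mult_pos_pos)
  have "(D*cz)*k3 = (D*ba)*(D*bb)" using ez by algebra
  hence 3: "0 < D*cz" using H k pc by (metis mult_pos_pos)
  show "0 < DX*cx \<and> 0 < DX*cy \<and> 0 < DX*cz" using fin_int[OF 1 2 3 DX(1)] .
next
  assume N: "\<not>(0 \<le> D*ba \<and> 0 \<le> D*bb \<and> 0 \<le> D*bc)"
  show "\<not>(0 \<le> DX*cx \<and> 0 \<le> DX*cy \<and> 0 \<le> DX*cz)"
  proof
    assume A: "0 \<le> DX*cx \<and> 0 \<le> DX*cy \<and> 0 \<le> DX*cz"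
    have cnz: "cx \<noteq> 0" "cy \<noteq> 0" "cz \<noteq> 0" using ex ey ez nz by auto
    have p1: "0 < cx*cy" "0 < cy*cz" "0 < cx*cz" using fin_ext DX(2) A cnz by blast+
    have "(D*bc)^2 * (ba*bb) = (cx*cy)*(k1*k2)" using ex ey by algebra
    hence q1: "0 < ba*bb" using pcl p1 k nz by (metis mult_pos_pos sq_pos mult_eq_0_iff)
    have "(D*ba)^2 * (bb*bc) = (cy*cz)*(k2*k3)" using ez ey by algebra
    hence q2: "0 < bb*bc" using pcl p1 k nz by (metis mult_pos_pos sq_pos mult_eq_0_iff)
    have "(D*bb)^2 * (ba*bc) = (cx*cz)*(k1*k3)" using ex ez by algebra
    hence q3: "0 < ba*bc" using pcl p1 k nz by (metis mult_pos_pos sq_pos mult_eq_0_iff)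
    have "D*ba = ba^2 + ba*bb + ba*bc" "D*bb = bb^2 + ba*bb + bb*bc" "D*bc = bc^2 + ba*bc + bb*bc"
      using D by (simp_all add: power2_eq_square algebra_simps)
    hence "0 < D*ba" "0 < D*bb" "0 < D*bc" using q1 q2 q3 nz by (simp_all add: add_pos_pos)
    thus False using N by simp
  qed
qed
lemma signs3:
  fixes Ga Gb Gc :: real
  assumes "Ga \<noteq> 0" "Gb \<noteq> 0" "Gc \<noteq> 0" "0 < Ga*Gb*Gc" "\<not>(0 \<le> Ga \<and> 0 \<le> Gb \<and> 0 \<le> Gc)"
  shows "(0 < Ga \<and> Gb < 0 \<and> Gc < 0) \<or> (0 < Gb \<and> Ga < 0 \<and> Gc < 0) \<or> (0 < Gc \<and> Ga < 0 \<and> Gb < 0)"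
  using assms by (cases "Ga > 0"; cases "Gb > 0"; cases "Gc > 0")
     (auto simp: zero_less_mult_iff mult_less_0_iff)

lemma neg_case:
  fixes G1 G2 G3 DQ D n2 n3 n23 :: real
  assumes "G1 * DQ = D^2 * (G2 * n2 + G3 * n3) - G2 * G3 * n23"
    "0 < G1" "G2 < 0" "G3 < 0" "D \<noteq> 0" "0 < n2" "0 < n3" "0 < n23"
  shows "DQ < 0"
proof -
  have "G2 * n2 + G3 * n3 < 0" using assms by (simp add: add_neg_neg mult_neg_pos)
  hence "D^2 * (G2 * n2 + G3 * n3) < 0" using assms(5) by (simp add: mult_pos_neg)
  moreover have "0 < G2 * G3 * n23" using assms by (simp add: mult_neg_neg)
  ultimately have "G1 * DQ < 0" using assms(1) by simp
  thus ?thesis using assms(2) by (simp add: mult_less_0_iff)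
qed

lemma sgr_p1:
  fixes D ba bb bc DX cx cy cz k Q na nb nc nab nbc nac :: real
  assumes D: "D = ba + bb + bc" and nz: "ba \<noteq> 0" "bb \<noteq> 0" "bc \<noteq> 0" "D \<noteq> 0"
    and DX: "DX = cx + cy + cz" "DX \<noteq> 0"
    and k: "0 < k" and n: "0 < na" "0 < nb" "0 < nc" "0 < nab" "0 < nbc" "0 < nac"
    and Q: "Q = na*ba + nb*bb + nc*bc"
    and IA: "ba*Q = D*(bb*nb + bc*nc) - bb*bc*nbc"
    and IB: "bb*Q = D*(ba*na + bc*nc) - ba*bc*nac"
    and IC: "bc*Q = D*(ba*na + bb*nb) - ba*bb*nab"
    and ex: "cx * k = ba * bc * Q" and ey: "cy * k = nc * ba * bc * D" and ez: "cz = bb"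
  shows "SGR D ba bb bc DX cx cy cz"
  unfolding SGR_def
proof (rule conjI; rule impI)
  assume H: "0 < D*ba \<and> 0 < D*bb \<and> 0 < D*bc"
  have "D^2 * (ba*bc) = (D*ba)*(D*bc)" by (simp add: power2_eq_square algebra_simps)
  hence bac: "0 < ba*bc" using H nz pcl by (metis mult_pos_pos sq_pos)
  have "D*Q = na*(D*ba) + nb*(D*bb) + nc*(D*bc)" using Q by (simp add: algebra_simps)
  hence dq: "0 < D*Q" using H n by (simp add: add_pos_pos)
  have "(D*cx)*k = (ba*bc)*(D*Q)" using ex by algebra
  hence 1: "0 < D*cx" using bac dq k pc by (metis mult_pos_pos)
  have "(D*cy)*k = (nc*(ba*bc))*D^2" using ey by algebra
  hence 2: "0 < D*cy" using bac n k nz pc by (metis mult_pos_pos sq_pos)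
  have 3: "0 < D*cz" using H ez by simp
  show "0 < DX*cx \<and> 0 < DX*cy \<and> 0 < DX*cz" using fin_int[OF 1 2 3 DX(1)] .
next
  assume N: "\<not>(0 \<le> D*ba \<and> 0 \<le> D*bb \<and> 0 \<le> D*bc)"
  show "\<not>(0 \<le> DX*cx \<and> 0 \<le> DX*cy \<and> 0 \<le> DX*cz)"
  proof
    assume A: "0 \<le> DX*cx \<and> 0 \<le> DX*cy \<and> 0 \<le> DX*cz"
    have cnz: "cy \<noteq> 0" "cz \<noteq> 0" using ey ez nz n k by auto
    have p1: "0 < cy*cz" using fin_ext DX(2) A cnz by blast
    have "k * (cy*cz) = nc * (ba*bb*bc*D)" using ey ez by algebra
    hence R: "0 < ba*bb*bc*D" using p1 k n pcl by (metis mult_pos_pos)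
    have "0 < DX*cy" using A cnz DX by (auto simp: order_le_less)
    hence "0 \<le> (DX*cx)*(DX*cy)" using A by simp
    moreover have "(DX*cx)*(DX*cy) = DX^2 * (cx*cy)" by (simp add: power2_eq_square algebra_simps)
    ultimately have "0 \<le> cx*cy" using DX(2) by (simp add: zero_le_mult_iff)
    hence "0 \<le> k^2 * (cx*cy)" by simp
    moreover have "k^2 * (cx*cy) = (nc * (ba*bc)^2) * (D*Q)" using ex ey by algebra
    moreover have "0 < nc * (ba*bc)^2" using n nz by simp
    ultimately have dq: "0 \<le> D*Q" by (simp add: zero_le_mult_iff)
    define Ga where "Ga = D*ba"
    define Gb where "Gb = D*bb"
    define Gc where "Gc = D*bc"
    have "Ga*Gb*Gc = D^2 * (ba*bb*bc*D)" unfolding Ga_def Gb_def Gc_def by (simp add: power2_eq_square algebra_simps)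
    hence "0 < Ga*Gb*Gc" using R nz by simp
    moreover have "Ga \<noteq> 0" "Gb \<noteq> 0" "Gc \<noteq> 0" unfolding Ga_def Gb_def Gc_def using nz by auto
    moreover have "\<not>(0 \<le> Ga \<and> 0 \<le> Gb \<and> 0 \<le> Gc)" using N unfolding Ga_def Gb_def Gc_def .
    ultimately have cs: "(0 < Ga \<and> Gb < 0 \<and> Gc < 0) \<or> (0 < Gb \<and> Ga < 0 \<and> Gc < 0) \<or> (0 < Gc \<and> Ga < 0 \<and> Gb < 0)"
      using signs3 by blast
    have JA: "Ga * (D*Q) = D^2 * (Gb*nb + Gc*nc) - Gb*Gc*nbc" unfolding Ga_def Gb_def Gc_def using IA by algebra
    have JB: "Gb * (D*Q) = D^2 * (Ga*na + Gc*nc) - Ga*Gc*nac" unfolding Ga_def Gb_def Gc_def using IB by algebra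
    have JC: "Gc * (D*Q) = D^2 * (Ga*na + Gb*nb) - Ga*Gb*nab" unfolding Ga_def Gb_def Gc_def using IC by algebra
    have "D*Q < 0" using cs
    proof (elim disjE)
      assume "0 < Ga \<and> Gb < 0 \<and> Gc < 0" thus ?thesis using neg_case[OF JA] nz n by blast
    next
      assume "0 < Gb \<and> Ga < 0 \<and> Gc < 0" thus ?thesis using neg_case[OF JB] nz n by blast
    next
      assume "0 < Gc \<and> Ga < 0 \<and> Gb < 0" thus ?thesis using neg_case[OF JC] nz n by blast
    qed
    thus False using dq by simp
  qed
qed
lemma circ_det:
  fixes b x z k :: complex
  assumes "cmod (k - b) = cmod k" "cmod (k - x) = cmod k" "cmod (k - z) = cmod k"
  shows "Im ((b - x) * cnj (b - z) * cnj x * z) = 0"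
proof -
  have e: "cmod (k - q) = cmod k \<Longrightarrow> (Re k - Re q)^2 + (Im k - Im q)^2 = (Re k)^2 + (Im k)^2" for q
    by (metis cmod_def minus_complex.simps real_sqrt_eq_iff)
  note h = e[OF assms(1)] e[OF assms(2)] e[OF assms(3)]
  show ?thesis using h by simp algebra
qed

lemma gen_cross:
  fixes a b c x y :: complex and t :: real
  assumes "cnj (b - c) * x = of_real (cr b c) * (of_real t + \<i>)"
    and "cnj (c - a) * y = of_real (cr c a) * (of_real t + \<i>)"
  shows "cr x y * ((cmod (b - c))^2 * (cmod (c - a))^2) = (t^2 + 1) * cr (b - a) (c - a) * cr b c * cr c a"
proof -
  have "of_real ((cmod (b - c))^2 * (cmod (c - a))^2) * (cnj x * y) = cnj (cnj (b - c) * x) * (cnj (c - a) * y) * (cnj (b - c) * (c - a))"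
    unfolding of_real_mult complex_norm_square by (simp add: algebra_simps)
  also have "\<dots> = of_real (cr b c * cr c a) * (of_real (t^2 + 1)) * (cnj (b - c) * (c - a))"
    unfolding assms by (simp add: complex_eq_iff power2_eq_square algebra_simps)
  finally have "Im (of_real ((cmod (b - c))^2 * (cmod (c - a))^2) * (cnj x * y)) = Im (of_real (cr b c * cr c a) * (of_real (t^2 + 1)) * (cnj (b - c) * (c - a)))" by simp
  thus ?thesis by (simp add: cr_def algebra_simps)
qed

lemma int3:
  assumes "0 < cr (b - a) (c - a) * cr (b - p) (c - p)" "0 < cr (b - a) (c - a) * cr (c - p) (a - p)"
    "0 < cr (b - a) (c - a) * cr (a - p) (b - p)"
  shows "p \<in> interior (convex hull {a,b,c})"
proof -
  define d where "d = cr (b - a) (c - a)"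
  have dnz: "d \<noteq> 0" using assms(1) d_def by auto
  define U where "U = {q. 0 < d * cr (b - q) (c - q) \<and> 0 < d * cr (c - q) (a - q) \<and> 0 < d * cr (a - q) (b - q)}"
  have "open U" unfolding U_def cr_def
    by (intro open_Collect_conj open_Collect_less continuous_intros)
  moreover have "p \<in> U" using assms unfolding U_def d_def by simp
  moreover have "U \<subseteq> convex hull {a,b,c}"
  proof
    fix q assume "q \<in> U"
    thus "q \<in> convex hull {a,b,c}" using hull3[of b a c q] dnz unfolding U_def d_def by auto
  qed
  ultimately show ?thesis using interior_maximal by blast
qed


lemma ncoll_D: "\<not> collinear {A, B, C} \<Longrightarrow> cr (B - A) (C - A) \<noteq> 0"
  using cr_coll by blast

lemma ncoll_ne: "\<not> collinear {A, B, C} \<Longrightarrow> A \<noteq> B \<and> B \<noteq> C \<and> C \<noteq> A"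
  by (auto simp: collinear_2 insert_commute)

lemma off_line: "B \<noteq> C \<Longrightarrow> P \<notin> affine hull {B, C} \<Longrightarrow> cr (B - P) (C - P) \<noteq> 0"
  using onl by blast

lemma FIN:
  fixes A B C P X Y Z :: complex
  assumes nc: "\<not> collinear {A, B, C}" and ncx: "\<not> collinear {X, Y, Z}"
    and pa: "P \<notin> affine hull {B, C}" and pb: "P \<notin> affine hull {C, A}" and pc: "P \<notin> affine hull {A, B}"
    and SG: "SGR (cr (B - A) (C - A)) (cr (B - P) (C - P)) (cr (C - P) (A - P)) (cr (A - P) (B - P))
               (cr (Y - X) (Z - X)) (cr (Y - P) (Z - P)) (cr (Z - P) (X - P)) (cr (X - P) (Y - P))"
  shows "(P \<in> interior (convex hull {A, B, C}) \<longrightarrow> P \<in> interior (convex hull {X, Y, Z})) \<and>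
         (P \<notin> convex hull {A, B, C} \<longrightarrow> P \<notin> convex hull {X, Y, Z})"
proof -
  have D: "cr (B - A) (C - A) \<noteq> 0" using ncoll_D nc by blast
  have DX: "cr (Y - X) (Z - X) \<noteq> 0" using ncoll_D ncx by blast
  have ne: "A \<noteq> B" "B \<noteq> C" "C \<noteq> A" using ncoll_ne nc by auto
  have b1: "cr (B - P) (C - P) \<noteq> 0" using off_line ne pa by blast
  have b2: "cr (C - P) (A - P) \<noteq> 0" using off_line ne pb by blast
  have b3: "cr (A - P) (B - P) \<noteq> 0" using off_line ne pc by blast
  note hA = hull3[OF D, of P] and hX = hull3[OF DX, of P]
  show ?thesis
  proof (rule conjI; rule impI)
    assume "P \<in> interior (convex hull {A, B, C})"
    hence "P \<in> convex hull {A, B, C}" using interior_subset by blast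
    hence "0 \<le> cr (B - A) (C - A) * cr (B - P) (C - P) \<and> 0 \<le> cr (B - A) (C - A) * cr (C - P) (A - P)
      \<and> 0 \<le> cr (B - A) (C - A) * cr (A - P) (B - P)" using hA by blast
    hence "0 < cr (B - A) (C - A) * cr (B - P) (C - P) \<and> 0 < cr (B - A) (C - A) * cr (C - P) (A - P)
      \<and> 0 < cr (B - A) (C - A) * cr (A - P) (B - P)" using D b1 b2 b3 by (auto simp: order_le_less)
    hence "0 < cr (Y - X) (Z - X) * cr (Y - P) (Z - P) \<and> 0 < cr (Y - X) (Z - X) * cr (Z - P) (X - P)
      \<and> 0 < cr (Y - X) (Z - X) * cr (X - P) (Y - P)" using SG unfolding SGR_def by blast
    thus "P \<in> interior (convex hull {X, Y, Z})" using int3 by blast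
  next
    assume "P \<notin> convex hull {A, B, C}"
    thus "P \<notin> convex hull {X, Y, Z}" using hA hX SG unfolding SGR_def by blast
  qed
qed

lemma line_t:
  assumes "x = b + of_real v * (c - b)" "cr b c \<noteq> 0"
  shows "cnj (b - c) * x = of_real (cr b c) * (of_real (Re (cnj (b - c) * x) / cr b c) + \<i>)"
proof -
  have "Im (cnj (b - c) * x) = cr b c" unfolding assms(1) cr_def by (simp add: algebra_simps)
  thus ?thesis using assms(2) by (simp add: complex_eq_iff)
qed

lemma rel:
  assumes "Im ((b - x) * cnj (b - z) * cnj x * z) = 0"
    and "x = b + of_real v * (c - b)" "v \<noteq> 0" "z = a + of_real s * (b - a)" "s \<noteq> 1"
    and "cnj (b - c) * x = of_real ba * (of_real ta + \<i>)" "cnj (a - b) * z = of_real bc * (of_real tc + \<i>)"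
    and "ba \<noteq> 0" "bc \<noteq> 0"
  shows "ta = tc"
proof -
  have hx: "b - x = of_real v * (b - c)" using assms(2) by (simp add: algebra_simps)
  have hz: "b - z = of_real (1 - s) * (b - a)" using assms(4) by (simp add: algebra_simps)
  have "(b - x) * cnj (b - z) * cnj x * z = (of_real v * (b - c)) * cnj (of_real (1 - s) * (b - a)) * cnj x * z"
    by (simp only: hx hz)
  also have "\<dots> = - of_real (v * (1 - s)) * (cnj (cnj (b - c) * x) * (cnj (a - b) * z))"
    by (simp add: algebra_simps)
  also have "\<dots> = - of_real (v * (1 - s)) * (cnj (of_real ba * (of_real ta + \<i>)) * (of_real bc * (of_real tc + \<i>)))"
    using assms(6,7) by simp
  finally have eq: "(b - x) * cnj (b - z) * cnj x * z = - of_real (v * (1 - s)) * (cnj (of_real ba * (of_real ta + \<i>)) * (of_real bc * (of_real tc + \<i>)))" .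
  have "Im ((b - x) * cnj (b - z) * cnj x * z) = - (v * (1 - s)) * ba * bc * (ta - tc)"
    unfolding eq by (simp add: algebra_simps)
  with assms(1) have "(v * (1 - s)) * ba * bc * (ta - tc) = 0" by simp
  thus ?thesis using assms(3,5,8,9) by simp
qed

lemma D_rot: "cr (c - b) (a - b) = cr (b - a) (c - a)" "cr (a - c) (b - c) = cr (b - a) (c - a)"
  by (simp_all add: cr_def algebra_simps)

lemma gen_core:
  fixes a b c x y z :: complex and t :: real
  assumes nz: "cr b c \<noteq> 0" "cr c a \<noteq> 0" "cr a b \<noteq> 0" "cr (b - a) (c - a) \<noteq> 0"
    and DX: "cr (y - x) (z - x) \<noteq> 0"
    and ne: "a \<noteq> b" "b \<noteq> c" "c \<noteq> a"
    and rx: "cnj (b - c) * x = of_real (cr b c) * (of_real t + \<i>)"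
    and ry: "cnj (c - a) * y = of_real (cr c a) * (of_real t + \<i>)"
    and rz: "cnj (a - b) * z = of_real (cr a b) * (of_real t + \<i>)"
  shows "SGR (cr (b - a) (c - a)) (cr b c) (cr c a) (cr a b) (cr (y - x) (z - x)) (cr y z) (cr z x) (cr x y)"
proof -
  define D where "D = cr (b - a) (c - a)"
  have t1: "0 < t^2 + 1" using zero_le_power2[of t] by linarith
  have dr1: "cr (c - b) (a - b) = D" "cr (a - c) (b - c) = D" unfolding D_def cr_def by (simp_all add: algebra_simps)
  have e1: "cr y z * ((cmod (c - a))^2 * (cmod (a - b))^2) = (t^2 + 1) * D * cr c a * cr a b"
    using gen_cross[OF ry rz] by (simp add: dr1)
  have e2: "cr z x * ((cmod (a - b))^2 * (cmod (b - c))^2) = (t^2 + 1) * D * cr a b * cr b c"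
    using gen_cross[OF rz rx] by (simp add: dr1)
  have e3: "cr x y * ((cmod (b - c))^2 * (cmod (c - a))^2) = (t^2 + 1) * D * cr b c * cr c a"
    using gen_cross[OF rx ry] unfolding D_def by simp
  show ?thesis unfolding D_def[symmetric]
  proof (rule sgr_gen[of _ _ _ _ _ _ _ _ "((cmod (c - a))^2 * (cmod (a - b))^2) / (t^2 + 1)"
        "((cmod (a - b))^2 * (cmod (b - c))^2) / (t^2 + 1)"
        "((cmod (b - c))^2 * (cmod (c - a))^2) / (t^2 + 1)"])
    show "D = cr b c + cr c a + cr a b" unfolding D_def cr_def by (simp add: algebra_simps)
    show "cr (y - x) (z - x) = cr y z + cr z x + cr x y" unfolding cr_def by (simp add: algebra_simps)
    show "cr y z * (((cmod (c - a))^2 * (cmod (a - b))^2) / (t^2 + 1)) = D * cr c a * cr a b"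
      using e1 t1 by (simp add: field_simps)
    show "cr z x * (((cmod (a - b))^2 * (cmod (b - c))^2) / (t^2 + 1)) = D * cr a b * cr b c"
      using e2 t1 by (simp add: field_simps)
    show "cr x y * (((cmod (b - c))^2 * (cmod (c - a))^2) / (t^2 + 1)) = D * cr b c * cr c a"
      using e3 t1 by (simp add: field_simps)
  qed (use nz DX ne t1 D_def in auto)
qed

lemma Q_ids:
  fixes a b c :: complex
  defines "Q \<equiv> (cmod a)^2 * cr b c + (cmod b)^2 * cr c a + (cmod c)^2 * cr a b"
  shows "cr b c * Q = cr (b - a) (c - a) * (cr c a * (cmod b)^2 + cr a b * (cmod c)^2) - cr c a * cr a b * (cmod (b - c))^2"
    "cr c a * Q = cr (b - a) (c - a) * (cr b c * (cmod a)^2 + cr a b * (cmod c)^2) - cr b c * cr a b * (cmod (a - c))^2"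
    "cr a b * Q = cr (b - a) (c - a) * (cr b c * (cmod a)^2 + cr c a * (cmod b)^2) - cr b c * cr c a * (cmod (a - b))^2"
  unfolding Q_def cr_def cmod_power2 by (simp_all add: algebra_simps) algebra+

lemma p1_core:
  fixes a b c z :: complex and t :: real
  assumes nz: "cr b c \<noteq> 0" "cr c a \<noteq> 0" "cr a b \<noteq> 0" "cr (b - a) (c - a) \<noteq> 0"
    and DX: "cr (a - c) (z - c) \<noteq> 0"
    and ne: "a \<noteq> b" "b \<noteq> c" "c \<noteq> a" "a \<noteq> 0" "b \<noteq> 0" "c \<noteq> 0"
    and rx: "cnj (b - c) * c = of_real (cr b c) * (of_real t + \<i>)"
    and rz: "cnj (a - b) * z = of_real (cr a b) * (of_real t + \<i>)"
  shows "SGR (cr (b - a) (c - a)) (cr b c) (cr c a) (cr a b) (cr (a - c) (z - c)) (cr a z) (cr z c) (cr c a)"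
proof -
  define D where "D = cr (b - a) (c - a)"
  define Q where "Q = (cmod a)^2 * cr b c + (cmod b)^2 * cr c a + (cmod c)^2 * cr a b"
  define N where "N = (cmod (a - b))^2"
  have Npos: "0 < N" unfolding N_def using ne by simp
  have E: "of_real (N * cr b c) * z = (a - b) * of_real (cr a b) * (cnj (b - c) * c)"
  proof -
    have nz: "of_real N * z = (a - b) * (cnj (a - b) * z)"
      unfolding N_def complex_norm_square by (simp add: algebra_simps)
    have "of_real (N * cr b c) * z = of_real (cr b c) * (of_real N * z)" by simp
    also have "\<dots> = of_real (cr b c) * ((a - b) * (of_real (cr a b) * (of_real t + \<i>)))"
      unfolding nz rz ..
    also have "\<dots> = (a - b) * of_real (cr a b) * (of_real (cr b c) * (of_real t + \<i>))"
      by (simp add: algebra_simps)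
    also have "\<dots> = (a - b) * of_real (cr a b) * (cnj (b - c) * c)" unfolding rx ..
    finally show ?thesis .
  qed
  have "cr a (of_real (N * cr b c) * z) = (N * cr b c) * cr a z" unfolding cr_def by (simp add: algebra_simps)
  moreover have "cr a ((a - b) * of_real (cr a b) * (cnj (b - c) * c)) = cr a b * Q"
    unfolding Q_def cr_def cmod_power2 by (simp add: algebra_simps) algebra
  ultimately have ex0: "(N * cr b c) * cr a z = cr a b * Q" using E by simp
  have "cr (of_real (N * cr b c) * z) c = (N * cr b c) * cr z c" unfolding cr_def by (simp add: algebra_simps)
  moreover have "cr ((a - b) * of_real (cr a b) * (cnj (b - c) * c)) c = (cmod c)^2 * cr a b * D"
    unfolding D_def cr_def cmod_power2 by (simp add: algebra_simps) algebra
  ultimately have ey0: "(N * cr b c) * cr z c = (cmod c)^2 * cr a b * D" using E by simp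
  show ?thesis unfolding D_def[symmetric]
  proof (rule sgr_p1[where k = "N * (cr b c)^2" and Q = Q and na = "(cmod a)^2" and nb = "(cmod b)^2"
        and nc = "(cmod c)^2" and nab = "(cmod (a - b))^2" and nbc = "(cmod (b - c))^2" and nac = "(cmod (a - c))^2"])
    show "D = cr b c + cr c a + cr a b" unfolding D_def cr_def by (simp add: algebra_simps)
    show "cr (a - c) (z - c) = cr a z + cr z c + cr c a" unfolding cr_def by (simp add: algebra_simps)
    show "Q = (cmod a)\<^sup>2 * cr b c + (cmod b)\<^sup>2 * cr c a + (cmod c)\<^sup>2 * cr a b" by (rule Q_def)
    show "cr a z * (N * (cr b c)\<^sup>2) = cr b c * cr a b * Q" using ex0 by algebra
    show "cr z c * (N * (cr b c)\<^sup>2) = (cmod c)\<^sup>2 * cr b c * cr a b * D" using ey0 by algebra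
    show "cr b c * Q = D * (cr c a * (cmod b)\<^sup>2 + cr a b * (cmod c)\<^sup>2) - cr c a * cr a b * (cmod (b - c))\<^sup>2"
      unfolding Q_def D_def by (rule Q_ids(1))
    show "cr c a * Q = D * (cr b c * (cmod a)\<^sup>2 + cr a b * (cmod c)\<^sup>2) - cr b c * cr a b * (cmod (a - c))\<^sup>2"
      unfolding Q_def D_def by (rule Q_ids(2))
    show "cr a b * Q = D * (cr b c * (cmod a)\<^sup>2 + cr c a * (cmod b)\<^sup>2) - cr b c * cr c a * (cmod (a - b))\<^sup>2"
      unfolding Q_def D_def by (rule Q_ids(3))
  qed (use nz DX ne Npos D_def in auto)
qed


lemma conc_im:
  assumes "concyclic S" "U \<in> S" "V \<in> S" "W \<in> S" "P \<in> S"
  shows "Im (((U - P) - (V - P)) * cnj ((U - P) - (W - P)) * cnj (V - P) * (W - P)) = 0"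
proof -
  obtain c0 r where "r > 0" "S \<subseteq> sphere c0 r" using assms(1) unfolding concyclic_def by blast
  hence d: "dist c0 U = r" "dist c0 V = r" "dist c0 W = r" "dist c0 P = r" using assms(2-5) by auto
  define k where "k = c0 - P"
  have "cmod (k - (U - P)) = cmod k" "cmod (k - (V - P)) = cmod k" "cmod (k - (W - P)) = cmod k"
    using d unfolding k_def dist_norm by (simp_all add: algebra_simps)
  thus ?thesis by (rule circ_det)
qed

lemma aff2t:
  assumes "X \<in> affine hull {B, C}" shows "\<exists>v::real. X - P = (B - P) + of_real v * ((C - P) - (B - P))"
proof -
  obtain v where "X = B + of_real v * (C - B)" using aff2[OF assms] by blast
  hence "X - P = (B - P) + of_real v * ((C - P) - (B - P))" by (simp add: algebra_simps)
  thus ?thesis by blast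
qed

lemma GEN:
  fixes A B C P X Y Z :: complex and t :: real
  assumes nc: "\<not> collinear {A, B, C}" and ncx: "\<not> collinear {X, Y, Z}"
    and pa: "P \<notin> affine hull {B, C}" and pb: "P \<notin> affine hull {C, A}" and pc: "P \<notin> affine hull {A, B}"
    and rx: "cnj ((B - P) - (C - P)) * (X - P) = of_real (cr (B - P) (C - P)) * (of_real t + \<i>)"
    and ry: "cnj ((C - P) - (A - P)) * (Y - P) = of_real (cr (C - P) (A - P)) * (of_real t + \<i>)"
    and rz: "cnj ((A - P) - (B - P)) * (Z - P) = of_real (cr (A - P) (B - P)) * (of_real t + \<i>)"
  shows "(P \<in> interior (convex hull {A, B, C}) \<longrightarrow> P \<in> interior (convex hull {X, Y, Z})) \<and>
         (P \<notin> convex hull {A, B, C} \<longrightarrow> P \<notin> convex hull {X, Y, Z})"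
proof (rule FIN[OF nc ncx pa pb pc])
  have D: "cr (B - A) (C - A) \<noteq> 0" using ncoll_D nc by blast
  have DX: "cr (Y - X) (Z - X) \<noteq> 0" using ncoll_D ncx by blast
  have ne: "A \<noteq> B" "B \<noteq> C" "C \<noteq> A" using ncoll_ne nc by auto
  have b1: "cr (B - P) (C - P) \<noteq> 0" using off_line ne pa by blast
  have b2: "cr (C - P) (A - P) \<noteq> 0" using off_line ne pb by blast
  have b3: "cr (A - P) (B - P) \<noteq> 0" using off_line ne pc by blast
  have e: "(B - P) - (A - P) = B - A" "(C - P) - (A - P) = C - A" "(Y - P) - (X - P) = Y - X" "(Z - P) - (X - P) = Z - X"
    by simp_all
  have "SGR (cr ((B - P) - (A - P)) ((C - P) - (A - P))) (cr (B - P) (C - P)) (cr (C - P) (A - P)) (cr (A - P) (B - P))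
     (cr ((Y - P) - (X - P)) ((Z - P) - (X - P))) (cr (Y - P) (Z - P)) (cr (Z - P) (X - P)) (cr (X - P) (Y - P))"
    by (rule gen_core[OF b1 b2 b3 _ _ _ _ _ rx ry rz]) (use D DX ne in \<open>simp_all only: e, auto\<close>)
  thus "SGR (cr (B - A) (C - A)) (cr (B - P) (C - P)) (cr (C - P) (A - P)) (cr (A - P) (B - P))
     (cr (Y - X) (Z - X)) (cr (Y - P) (Z - P)) (cr (Z - P) (X - P)) (cr (X - P) (Y - P))" by (simp only: e)
qed


lemma P1:
  fixes A B C P Z :: complex
  assumes nc: "\<not> collinear {A, B, C}"
    and pa: "P \<notin> affine hull {B, C}" and pb: "P \<notin> affine hull {C, A}" and pc: "P \<notin> affine hull {A, B}"
    and hz: "Z \<in> affine hull {A, B}" and zb: "Z \<noteq> B" and cc: "concyclic {B, Z, C, P}"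
    and ncx: "\<not> collinear {C, A, Z}"
  shows "(P \<in> interior (convex hull {A, B, C}) \<longrightarrow> P \<in> interior (convex hull {C, A, Z})) \<and>
         (P \<notin> convex hull {A, B, C} \<longrightarrow> P \<notin> convex hull {C, A, Z})"
proof (rule FIN[OF nc ncx pa pb pc])
  define a where "a = A - P"
  define b where "b = B - P"
  define c where "c = C - P"
  define z where "z = Z - P"
  have D: "cr (b - a) (c - a) \<noteq> 0" using ncoll_D[OF nc] unfolding a_def b_def c_def by simp
  have DX: "cr (a - c) (z - c) \<noteq> 0" using ncoll_D[OF ncx] unfolding a_def z_def c_def by simp
  have ne: "A \<noteq> B" "B \<noteq> C" "C \<noteq> A" using ncoll_ne nc by auto
  have b1: "cr b c \<noteq> 0" using off_line ne pa unfolding b_def c_def by blast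
  have b2: "cr c a \<noteq> 0" using off_line ne pb unfolding a_def c_def by blast
  have b3: "cr a b \<noteq> 0" using off_line ne pc unfolding a_def b_def by blast
  have nz0: "a \<noteq> 0" "b \<noteq> 0" "c \<noteq> 0" using b1 b2 b3 by (auto simp: cr_def)
  have ne': "a \<noteq> b" "b \<noteq> c" "c \<noteq> a" using ne unfolding a_def b_def c_def by auto
  obtain s where zs: "z = a + of_real s * (b - a)" using aff2t[OF hz, of P] unfolding a_def b_def z_def by blast
  have s1: "s \<noteq> 1" using zb zs unfolding z_def b_def by auto
  have cx: "c = b + of_real 1 * (c - b)" by simp
  define ta where "ta = Re (cnj (b - c) * c) / cr b c"
  define tc where "tc = Re (cnj (a - b) * z) / cr a b"
  have rx: "cnj (b - c) * c = of_real (cr b c) * (of_real ta + \<i>)" unfolding ta_def by (rule line_t[OF cx b1])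
  have rz: "cnj (a - b) * z = of_real (cr a b) * (of_real tc + \<i>)" unfolding tc_def by (rule line_t[OF zs b3])
  have im: "Im ((b - c) * cnj (b - z) * cnj c * z) = 0"
    using conc_im[OF cc, of B C Z] unfolding b_def c_def z_def by simp
  have "ta = tc" by (rule rel[OF im cx _ zs s1 rx rz b1 b3]) simp
  hence rz': "cnj (a - b) * z = of_real (cr a b) * (of_real ta + \<i>)" using rz by simp
  have "SGR (cr (b - a) (c - a)) (cr b c) (cr c a) (cr a b) (cr (a - c) (z - c)) (cr a z) (cr z c) (cr c a)"
    by (rule p1_core[OF b1 b2 b3 D DX ne' nz0 rx rz'])
  thus "SGR (cr (B - A) (C - A)) (cr (B - P) (C - P)) (cr (C - P) (A - P)) (cr (A - P) (B - P))
     (cr (A - C) (Z - C)) (cr (A - P) (Z - P)) (cr (Z - P) (C - P)) (cr (C - P) (A - P))"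
    unfolding a_def b_def c_def z_def by simp
qed


theorem lemma1:
  fixes A B C P X Y Z :: complex
  assumes "\<not> collinear {A, B, C}"
    and "P \<notin> affine hull {B, C}" and "P \<notin> affine hull {C, A}" and "P \<notin> affine hull {A, B}"
    and "miquel_triangle A B C P X Y Z"
    and "\<not> collinear {X, Y, Z}"
  shows "(P \<in> interior (convex hull {A, B, C}) \<longrightarrow> P \<in> interior (convex hull {X, Y, Z})) \<and>
         (P \<notin> convex hull {A, B, C} \<longrightarrow> P \<notin> convex hull {X, Y, Z})"
proof -
  note nc = assms(1) and pa = assms(2) and pb = assms(3) and pc = assms(4) and ncx = assms(6)
  have hx: "X \<in> affine hull {B, C}" and hy: "Y \<in> affine hull {C, A}" and hz: "Z \<in> affine hull {A, B}"
    and cA: "concyclic {A, Y, Z, P}" and cB: "concyclic {B, Z, X, P}" and cC: "concyclic {C, X, Y, P}"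
    using assms(5) unfolding miquel_triangle_def by auto
  have ne: "A \<noteq> B" "B \<noteq> C" "C \<noteq> A" using ncoll_ne nc by auto
  have nex: "X \<noteq> Y" "Y \<noteq> Z" "Z \<noteq> X" using ncoll_ne ncx by auto
  have b1: "cr (B - P) (C - P) \<noteq> 0" using off_line ne pa by blast
  have b2: "cr (C - P) (A - P) \<noteq> 0" using off_line ne pb by blast
  have b3: "cr (A - P) (B - P) \<noteq> 0" using off_line ne pc by blast
  obtain vx where vx: "X - P = (B - P) + of_real vx * ((C - P) - (B - P))" using aff2t[OF hx] by blast
  obtain vy where vy: "Y - P = (C - P) + of_real vy * ((A - P) - (C - P))" using aff2t[OF hy] by blast
  obtain vz where vz: "Z - P = (A - P) + of_real vz * ((B - P) - (A - P))" using aff2t[OF hz] by blast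
  define ta where "ta = Re (cnj ((B - P) - (C - P)) * (X - P)) / cr (B - P) (C - P)"
  define tb where "tb = Re (cnj ((C - P) - (A - P)) * (Y - P)) / cr (C - P) (A - P)"
  define tc where "tc = Re (cnj ((A - P) - (B - P)) * (Z - P)) / cr (A - P) (B - P)"
  have rx: "cnj ((B - P) - (C - P)) * (X - P) = of_real (cr (B - P) (C - P)) * (of_real ta + \<i>)"
    unfolding ta_def by (rule line_t[OF vx b1])
  have ry: "cnj ((C - P) - (A - P)) * (Y - P) = of_real (cr (C - P) (A - P)) * (of_real tb + \<i>)"
    unfolding tb_def by (rule line_t[OF vy b2])
  have rz: "cnj ((A - P) - (B - P)) * (Z - P) = of_real (cr (A - P) (B - P)) * (of_real tc + \<i>)"
    unfolding tc_def by (rule line_t[OF vz b3])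
  have RB: "X = B \<or> Z = B \<or> ta = tc"
  proof (cases "X = B \<or> Z = B")
    case False
    have v0: "vx \<noteq> 0" using False vx by auto
    have v1: "vz \<noteq> 1" using False vz by auto
    have im: "Im (((B - P) - (X - P)) * cnj ((B - P) - (Z - P)) * cnj (X - P) * (Z - P)) = 0"
      by (rule conc_im[OF cB]) auto
    show ?thesis using rel[OF im vx v0 vz v1 rx rz b1 b3] by blast
  qed blast
  have RC: "X = C \<or> Y = C \<or> tb = ta"
  proof (cases "X = C \<or> Y = C")
    case False
    have v0: "vy \<noteq> 0" using False vy by auto
    have v1: "vx \<noteq> 1" using False vx by auto
    have im: "Im (((C - P) - (Y - P)) * cnj ((C - P) - (X - P)) * cnj (Y - P) * (X - P)) = 0"
      by (rule conc_im[OF cC]) auto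
    show ?thesis using rel[OF im vy v0 vx v1 ry rx b2 b1] by blast
  qed blast
  have RA: "Y = A \<or> Z = A \<or> tc = tb"
  proof (cases "Y = A \<or> Z = A")
    case False
    have v0: "vz \<noteq> 0" using False vz by auto
    have v1: "vy \<noteq> 1" using False vy by auto
    have im: "Im (((A - P) - (Z - P)) * cnj ((A - P) - (Y - P)) * cnj (Z - P) * (Y - P)) = 0"
      by (rule conc_im[OF cA]) auto
    show ?thesis using rel[OF im vz v0 vy v1 rz ry b3 b2] by blast
  qed blast
  have cl1: "\<not> (X = B \<and> Y = A)"
  proof
    assume h: "X = B \<and> Y = A"
    have "{X, Y, Z} \<subseteq> affine hull {A, B}" using h hz by (auto intro: hull_inc)
    thus False using ncx collinear_affine_hull by blast
  qed
  have cl2: "\<not> (X = C \<and> Z = A)"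
  proof
    assume h: "X = C \<and> Z = A"
    have "{X, Y, Z} \<subseteq> affine hull {C, A}" using h hy by (auto intro: hull_inc)
    thus False using ncx collinear_affine_hull by blast
  qed
  have cl3: "\<not> (Y = C \<and> Z = B)"
  proof
    assume h: "Y = C \<and> Z = B"
    have "{X, Y, Z} \<subseteq> affine hull {B, C}" using h hx by (auto intro: hull_inc)
    thus False using ncx collinear_affine_hull by blast
  qed
  have cs: "(ta = tb \<and> tb = tc) \<or> (X = C \<and> Y = A \<and> Z \<noteq> B) \<or> (Y = A \<and> Z = B \<and> X \<noteq> C) \<or>
    (Z = B \<and> X = C \<and> Y \<noteq> A) \<or> (X = B \<and> Z = A \<and> Y \<noteq> C) \<or> (Z = A \<and> Y = C \<and> X \<noteq> B) \<or>
    (Y = C \<and> X = B \<and> Z \<noteq> A) \<or> (X = C \<and> Y = A \<and> Z = B) \<or> (X = B \<and> Y = C \<and> Z = A)"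
    using RA RB RC ne nex cl1 cl2 cl3 by metis
  have nc': "\<not> collinear {B, C, A}" "\<not> collinear {C, A, B}" "\<not> collinear {A, C, B}" "\<not> collinear {C, B, A}" "\<not> collinear {B, A, C}"
    using nc by (simp_all add: insert_commute)
  have pa': "P \<notin> affine hull {C, B}" using pa by (simp add: insert_commute)
  have pb': "P \<notin> affine hull {A, C}" using pb by (simp add: insert_commute)
  have pc': "P \<notin> affine hull {B, A}" using pc by (simp add: insert_commute)
  have hh: "convex hull {B, C, A} = convex hull {A, B, C}" "convex hull {C, A, B} = convex hull {A, B, C}"
    "convex hull {A, C, B} = convex hull {A, B, C}" "convex hull {C, B, A} = convex hull {A, B, C}"
    "convex hull {B, A, C} = convex hull {A, B, C}"
    by (simp_all add: insert_commute)
  from cs show ?thesis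
  proof (elim disjE conjE)
    assume e: "ta = tb" "tb = tc"
    have ry': "cnj ((C - P) - (A - P)) * (Y - P) = of_real (cr (C - P) (A - P)) * (of_real ta + \<i>)"
      using ry e by simp
    have rz': "cnj ((A - P) - (B - P)) * (Z - P) = of_real (cr (A - P) (B - P)) * (of_real ta + \<i>)"
      using rz e by simp
    show ?thesis by (rule GEN[OF nc ncx pa pb pc rx ry' rz'])
  next
    assume h: "X = C" "Y = A" "Z \<noteq> B"
    show ?thesis using P1[OF nc pa pb pc hz h(3)] cB ncx h by simp
  next
    assume h: "Y = A" "Z = B" "X \<noteq> C"
    have "{Y, Z, X} = {X, Y, Z}" by auto
    thus ?thesis using P1[OF nc'(1) pb pc pa hx h(3)] cC ncx h hh by (simp add: insert_commute)
  next
    assume h: "Z = B" "X = C" "Y \<noteq> A"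
    thus ?thesis using P1[OF nc'(2) pc pa pb hy h(3)] cA ncx h hh by (simp add: insert_commute)
  next
    assume h: "X = B" "Z = A" "Y \<noteq> C"
    have hy': "Y \<in> affine hull {A, C}" using hy by (simp add: insert_commute)
    thus ?thesis using P1[OF nc'(3) pa' pc' pb' hy' h(3)] cC ncx h hh by (simp add: insert_commute)
  next
    assume h: "Z = A" "Y = C" "X \<noteq> B"
    have hx': "X \<in> affine hull {C, B}" using hx by (simp add: insert_commute)
    thus ?thesis using P1[OF nc'(4) pc' pb' pa' hx' h(3)] cB ncx h hh by (simp add: insert_commute)
  next
    assume h: "Y = C" "X = B" "Z \<noteq> A"
    have hz': "Z \<in> affine hull {B, A}" using hz by (simp add: insert_commute)
    thus ?thesis using P1[OF nc'(5) pb' pa' pc' hz' h(3)] cA ncx h hh by (simp add: insert_commute)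
  next
    assume h: "X = C" "Y = A" "Z = B"
    thus ?thesis using hh by simp
  next
    assume h: "X = B" "Y = C" "Z = A"
    thus ?thesis using hh by simp
  qed
qed

end
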